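(* Let $k\ge 2$ and let $G_1,\dots,G_k$ be connected graphs, each with at least $3$ vertices, and let $G^*=G_1\Box G_2\Box\cdots\Box G_k$. Then $$rx_3(G^* )\le \sum_{i=1}^k rx_3(G_i).$$ Moreover, if $rx_3(G_i)=sdiam_3(G_i)$ for every $i$, then equality holds.
   Context: All graphs are finite, simple, undirected. An edge coloring may give adjacent edges the same color. A tree is rainbow if no two of its edges have the same color. For a connected graph $G$ on at least $3$ vertices, a $3$-rainbow coloring is an edge coloring such that every set of $3$ vertices is contained in some rainbow tree; $rx_3(G)$ is the minimum number of colors of a $3$-rainbow coloring. The Steiner distance $d(S)$ of a vertex set $S$ is the minimum number of edges of a tree containing $S$, and $sdiam_3(G)=\max\{d(S): S\subseteq V(G),|S|=3\}$. The Cartesian product $G\Box H$ has vertex set $V(G)\times V(H)$, with $(g_1,h_1)\sim(g_2,h_2)$ iff ($g_1=g_2$ and $h_1h_2\in E(H)$) or ($h_1=h_2$ and $g_1g_2\in E(G)$). *)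

theory Defs
  imports Main
begin

type_synonym 'a graph = "'a set \<times> 'a set set"

definition verts :: "'a graph \<Rightarrow> 'a set" where "verts G = fst G"
definition edges :: "'a graph \<Rightarrow> 'a set set" where "edges G = snd G"

definition simple_graph :: "'a graph \<Rightarrow> bool" where
  "simple_graph G \<longleftrightarrow> finite (verts G) \<and>
     (\<forall>e\<in>edges G. e \<subseteq> verts G \<and> card e = 2)"

definition adj :: "'a graph \<Rightarrow> 'a \<Rightarrow> 'a \<Rightarrow> bool" where
  "adj G u v \<longleftrightarrow> {u, v} \<in> edges G"

definition connected_graph :: "'a graph \<Rightarrow> bool" where
  "connected_graph G \<longleftrightarrow> verts G \<noteq> {} \<and>
     (\<forall>u\<in>verts G. \<forall>v\<in>verts G. (u, v) \<in> {(x, y). adj G x y}\<^sup>*)"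

definition is_cycle :: "'a graph \<Rightarrow> 'a list \<Rightarrow> bool" where
  "is_cycle G cs \<longleftrightarrow> length cs \<ge> 3 \<and> distinct cs \<and> set cs \<subseteq> verts G \<and>
     (\<forall>i < length cs. adj G (cs ! i) (cs ! ((i + 1) mod length cs)))"

definition acyclic_graph :: "'a graph \<Rightarrow> bool" where
  "acyclic_graph G \<longleftrightarrow> \<not> (\<exists>cs. is_cycle G cs)"

definition is_tree :: "'a graph \<Rightarrow> bool" where
  "is_tree T \<longleftrightarrow> simple_graph T \<and> connected_graph T \<and> acyclic_graph T"

definition subgraph :: "'a graph \<Rightarrow> 'a graph \<Rightarrow> bool" where
  "subgraph H G \<longleftrightarrow> verts H \<subseteq> verts G \<and> edges H \<subseteq> edges G"

definition rainbow :: "('a set \<Rightarrow> nat) \<Rightarrow> 'a graph \<Rightarrow> bool" where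
  "rainbow c T \<longleftrightarrow> inj_on c (edges T)"

definition three_rainbow_coloring :: "'a graph \<Rightarrow> ('a set \<Rightarrow> nat) \<Rightarrow> bool" where
  "three_rainbow_coloring G c \<longleftrightarrow>
     (\<forall>S. S \<subseteq> verts G \<and> card S = 3 \<longrightarrow>
        (\<exists>T. subgraph T G \<and> is_tree T \<and> rainbow c T \<and> S \<subseteq> verts T))"

definition rx3 :: "'a graph \<Rightarrow> nat" where
  "rx3 G = (LEAST n. \<exists>c. three_rainbow_coloring G c \<and> c ` edges G \<subseteq> {..<n})"

definition steiner_dist :: "'a graph \<Rightarrow> 'a set \<Rightarrow> nat" where
  "steiner_dist G S = (LEAST m. \<exists>T. subgraph T G \<and> is_tree T \<and> S \<subseteq> verts T \<and>
                                      card (edges T) = m)"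

definition sdiam3 :: "'a graph \<Rightarrow> nat" where
  "sdiam3 G = Max {steiner_dist G S | S. S \<subseteq> verts G \<and> card S = 3}"

text \<open>Binary product on pair vertices, and the iterated product
  G1 \<box> (G2 \<box> (\<dots> \<box> Gk)) of a list of graphs with vertices encoded as lists
  (the pair (x, xs) encoded as x # xs); the empty product is the one-vertex graph,
  which is a unit for \<box> up to isomorphism.\<close>
definition cart_prod :: "'a graph \<Rightarrow> 'b graph \<Rightarrow> ('a \<times> 'b) graph" where
  "cart_prod G H = (verts G \<times> verts H,
     {{(g1, h1), (g2, h2)} | g1 h1 g2 h2.
        g1 \<in> verts G \<and> g2 \<in> verts G \<and> h1 \<in> verts H \<and> h2 \<in> verts H \<and>
        ((g1 = g2 \<and> {h1, h2} \<in> edges H) \<or> (h1 = h2 \<and> {g1, g2} \<in> edges G))})"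

fun cart_prod_list :: "'a graph list \<Rightarrow> 'a list graph" where
  "cart_prod_list [] = ({[]}, {})"
| "cart_prod_list (G # Gs) =
     (let P = cart_prod G (cart_prod_list Gs); f = (\<lambda>(x, xs). x # xs)
      in (f ` verts P, (\<lambda>e. f ` e) ` edges P))"

end

theory Submission
  imports Defs "HOL-Library.Transitive_Closure_Table"
begin


lemma verts_pair[simp]: "verts (V, E) = V" by (simp add: verts_def)
lemma edges_pair[simp]: "edges (V, E) = E" by (simp add: edges_def)

definition reach :: "'b set set \<Rightarrow> 'b \<Rightarrow> 'b \<Rightarrow> bool" where
  "reach E u v \<longleftrightarrow> (u, v) \<in> {(x, y). {x, y} \<in> E}\<^sup>*"

lemma reach_refl[simp]: "reach E u u" by (simp add: reach_def)

lemma reach_edge: "{u, v} \<in> E \<Longrightarrow> reach E u v"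
  unfolding reach_def by (rule r_into_rtrancl) simp

lemma reach_trans: "reach E u v \<Longrightarrow> reach E v w \<Longrightarrow> reach E u w"
  unfolding reach_def by (rule rtrancl_trans)

lemma reach_mono: "reach E u v \<Longrightarrow> E \<subseteq> E' \<Longrightarrow> reach E' u v"
  unfolding reach_def by (erule rev_subsetD[OF _ rtrancl_mono]) auto

lemma reach_sym: "reach E u v \<Longrightarrow> reach E v u"
  unfolding reach_def
proof (induction rule: rtrancl_induct)
  case base then show ?case by simp
next
  case (step y z)
  then have "(z, y) \<in> {(x, y). {x, y} \<in> E}\<^sup>*" by (auto simp: insert_commute)
  then show ?case using step(3) by (rule rtrancl_trans)
qed

lemma reach_lift:
  assumes "\<And>p q. {p, q} \<in> E \<Longrightarrow> reach E' p q" and "reach E u v"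
  shows "reach E' u v"
  using assms(2) unfolding reach_def
proof (induction rule: rtrancl_induct)
  case base then show ?case by simp
next
  case (step y z)
  then show ?case using assms(1)[of y z] unfolding reach_def by (auto intro: rtrancl_trans)
qed

lemma reach_map:
  assumes "\<And>p q. {p, q} \<in> E \<Longrightarrow> f p = f q \<or> {f p, f q} \<in> E'" and "reach E u v"
  shows "reach E' (f u) (f v)"
  using assms(2) unfolding reach_def
proof (induction rule: rtrancl_induct)
  case base then show ?case by simp
next
  case (step y z)
  then show ?case using assms(1)[of y z] by (auto intro: rtrancl_into_rtrancl)
qed

lemma reach_end: "reach E u v \<Longrightarrow> v = u \<or> v \<in> \<Union>E"
  unfolding reach_def by (induction rule: rtrancl_induct) auto

lemma reach_in: "reach E u v \<Longrightarrow> u \<in> V \<Longrightarrow> \<Union>E \<subseteq> V \<Longrightarrow> v \<in> V"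
  using reach_end[of E u v] by auto

lemma connected_reach: "connected_graph G \<longleftrightarrow> verts G \<noteq> {} \<and>
   (\<forall>u\<in>verts G. \<forall>v\<in>verts G. reach (edges G) u v)"
  unfolding connected_graph_def reach_def adj_def by simp

lemma simple_finite_edges: "simple_graph G \<Longrightarrow> finite (edges G)"
  unfolding simple_graph_def
  by (rule finite_subset[of _ "Pow (verts G)"]) auto

lemma simple_edge_card: "simple_graph G \<Longrightarrow> e \<in> edges G \<Longrightarrow> card e = 2"
  unfolding simple_graph_def by auto

lemma simple_edge_sub: "simple_graph G \<Longrightarrow> e \<in> edges G \<Longrightarrow> e \<subseteq> verts G"
  unfolding simple_graph_def by auto

lemma doubleton_nth:
  assumes "distinct cs" "i < length cs" "j < length cs" "1 < length cs"
    "{cs ! i, cs ! j} = {cs ! 0, cs ! 1}"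
  shows "(i = 0 \<and> j = 1) \<or> (i = 1 \<and> j = 0)"
proof -
  have l0: "0 < length cs" "1 < length cs" using assms by auto
  have "(cs!i = cs!0 \<and> cs!j = cs!1) \<or> (cs!i = cs!1 \<and> cs!j = cs!0)"
    using assms(5) by (auto simp: doubleton_eq_iff)
  then show ?thesis
    using nth_eq_iff_index_eq[OF assms(1) assms(2) l0(1)] nth_eq_iff_index_eq[OF assms(1) assms(2) l0(2)]
      nth_eq_iff_index_eq[OF assms(1) assms(3) l0(1)] nth_eq_iff_index_eq[OF assms(1) assms(3) l0(2)]
    by auto
qed

lemma cycle_edge_removal:
  assumes cyc: "is_cycle (V, E) cs"
  shows "connected_graph (V, E) \<Longrightarrow> connected_graph (V, E - {{cs ! 0, cs ! 1}})"
proof -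
  assume conn: "connected_graph (V, E)"
  define n where "n = length cs"
  define e where "e = {cs ! 0, cs ! 1}"
  have n3: "n \<ge> 3" and dist: "distinct cs"
    and ad: "\<And>i. i < n \<Longrightarrow> {cs ! i, cs ! ((i + 1) mod n)} \<in> E"
    using cyc unfolding is_cycle_def n_def adj_def by auto
  have ne: "\<And>i. i < n \<Longrightarrow> i \<ge> 1 \<Longrightarrow> {cs ! i, cs ! ((i + 1) mod n)} \<noteq> e"
  proof
    fix i assume i: "i < n" "i \<ge> 1" "{cs ! i, cs ! ((i + 1) mod n)} = e"
    have m: "(i+1) mod n < n" using n3 by auto
    have "(i = 0 \<and> (i + 1) mod n = 1) \<or> (i = 1 \<and> (i + 1) mod n = 0)"
    proof (rule doubleton_nth[OF dist])
      show "i < length cs" "(i+1) mod n < length cs" "1 < length cs" using i m n3 n_def by auto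
      show "{cs ! i, cs ! ((i + 1) mod n)} = {cs ! 0, cs ! 1}" using i(3) e_def by simp
    qed
    moreover have "i \<noteq> 0" using i(2) by simp
    ultimately have i1: "i = 1" and m0: "(i + 1) mod n = 0" by blast+
    from m0 have "(1 + 1::nat) mod n = 0" unfolding i1 .
    moreover have "(1 + 1::nat) mod n = 2" using n3 by simp
    ultimately show False by simp
  qed
  have step: "\<And>j. 1 \<le> j \<Longrightarrow> j < n \<Longrightarrow> reach (E - {e}) (cs ! 1) (cs ! j)"
  proof -
    fix j show "1 \<le> j \<Longrightarrow> j < n \<Longrightarrow> reach (E - {e}) (cs ! 1) (cs ! j)"
    proof (induction j)
      case 0 then show ?case by simp
    next
      case (Suc j)
      show ?case
      proof (cases "j = 0")
        case True then show ?thesis by simp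
      next
        case False
        then have r: "reach (E - {e}) (cs ! 1) (cs ! j)" using Suc by auto
        have ed: "{cs ! j, cs ! (Suc j)} \<in> E - {e}"
          using ad[of j] ne[of j] False Suc.prems by auto
        show ?thesis by (rule reach_trans[OF r reach_edge[OF ed]])
      qed
    qed
  qed
  have r1: "reach (E - {e}) (cs ! 1) (cs ! (n - 1))" using step[of "n - 1"] n3 by auto
  have ed: "{cs ! (n - 1), cs ! 0} \<in> E - {e}"
    using ad[of "n - 1"] ne[of "n - 1"] n3 by auto
  have r10: "reach (E - {e}) (cs ! 1) (cs ! 0)" by (rule reach_trans[OF r1 reach_edge[OF ed]])
  have lift: "\<And>p q. {p, q} \<in> E \<Longrightarrow> reach (E - {e}) p q"
  proof -
    fix p q assume pq: "{p, q} \<in> E"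
    show "reach (E - {e}) p q"
    proof (cases "{p, q} = e")
      case False then show ?thesis using pq by (auto intro: reach_edge)
    next
      case True
      then have "(p = cs ! 0 \<and> q = cs ! 1) \<or> (p = cs ! 1 \<and> q = cs ! 0)"
        unfolding e_def by (auto simp: doubleton_eq_iff)
      then show ?thesis using r10 reach_sym[OF r10] by (elim disjE conjE) simp_all
    qed
  qed
  have c: "V \<noteq> {}" "\<forall>u\<in>V. \<forall>v\<in>V. reach E u v" using conn by (simp_all add: connected_reach)
  have "\<forall>u\<in>V. \<forall>v\<in>V. reach (E - {e}) u v" using c(2) reach_lift[OF lift] by blast
  then have "connected_graph (V, E - {e})" unfolding connected_reach using c(1) by simp
  then show ?thesis by (simp only: e_def)
qed

lemma spanning_tree:
  assumes sg: "simple_graph H" and cg: "connected_graph H"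
  shows "\<exists>T. is_tree T \<and> verts T = verts H \<and> edges T \<subseteq> edges H"
proof -
  have fin: "finite (edges H)" using sg by (rule simple_finite_edges)
  have main: "\<And>E. E \<subseteq> edges H \<Longrightarrow> connected_graph (verts H, E) \<Longrightarrow>
     \<exists>T. is_tree T \<and> verts T = verts H \<and> edges T \<subseteq> edges H"
  proof -
    fix E show "E \<subseteq> edges H \<Longrightarrow> connected_graph (verts H, E) \<Longrightarrow>
     \<exists>T. is_tree T \<and> verts T = verts H \<and> edges T \<subseteq> edges H"
    proof (induction "card E" arbitrary: E rule: less_induct)
      case less
      have sE: "simple_graph (verts H, E)" using sg less.prems(1)
        unfolding simple_graph_def by auto
      show ?case
      proof (cases "acyclic_graph (verts H, E)")
        case True
        then show ?thesis using sE less.prems unfolding is_tree_def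
          by (intro exI[of _ "(verts H, E)"]) auto
      next
        case False
        then obtain cs where cs: "is_cycle (verts H, E) cs" unfolding acyclic_graph_def by auto
        then have "{cs ! 0, cs ! 1} \<in> E" unfolding is_cycle_def adj_def
          apply (elim conjE)
          apply (drule spec[of _ 0])
          by auto
        moreover have "finite E" using fin less.prems(1) finite_subset by blast
        ultimately have "card (E - {{cs ! 0, cs ! 1}}) < card E"
          by (meson card_Diff1_less)
        then show ?thesis
          using less.hyps[of "E - {{cs ! 0, cs ! 1}}"] less.prems
            cycle_edge_removal[OF cs] by auto
      qed
    qed
  qed
  have eq: "(verts H, edges H) = H" by (simp add: verts_def edges_def)
  show ?thesis using main[of "edges H"] cg by (simp add: eq)
qed



fun pedges :: "'b \<Rightarrow> 'b list \<Rightarrow> 'b set set" where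
  "pedges a [] = {}"
| "pedges a (y # ys) = insert {a, y} (pedges y ys)"

lemma reach_path: "reach E u v \<longleftrightarrow> (\<exists>p. rtrancl_path (\<lambda>x y. {x, y} \<in> E) u p v)"
  unfolding reach_def rtranclp_eq_rtrancl_path[symmetric] rtranclp_rtrancl_eq ..

lemma pedges_sub_E: "rtrancl_path (\<lambda>x y. {x, y} \<in> E) a p b \<Longrightarrow> pedges a p \<subseteq> E"
  by (induction rule: rtrancl_path.induct) auto

lemma pedges_sub_set: "e \<in> pedges a p \<Longrightarrow> e \<subseteq> set (a # p)"
  by (induction a p rule: pedges.induct) auto

lemma pedges_reach: "rtrancl_path R a p b \<Longrightarrow> reach (pedges a p) a b"
proof (induction rule: rtrancl_path.induct)
  case (base x) then show ?case by simp
next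
  case (step x y ys z)
  have "reach (pedges x (y # ys)) x y" by (rule reach_edge) simp
  moreover have "reach (pedges x (y # ys)) y z"
    using step(3) by (rule reach_mono) auto
  ultimately show ?case by (rule reach_trans)
qed

lemma split_path:
  assumes "rtrancl_path R a p b" "distinct (a # p)" "m \<in> set (a # p)"
  shows "\<exists>E1 E2. E1 \<union> E2 \<subseteq> pedges a p \<and> E1 \<inter> E2 = {} \<and> reach E1 a m \<and> reach E2 b m"
  using assms
proof (induction arbitrary: m rule: rtrancl_path.induct)
  case (base x)
  then show ?case by (intro exI[of _ "{}"]) auto
next
  case (step x y ys z)
  show ?case
  proof (cases "m = x")
    case True
    have "reach (pedges x (y # ys)) x z" using pedges_reach[OF rtrancl_path.step[OF step(1,2)]] .
    then have "reach (pedges x (y # ys)) z x" by (rule reach_sym)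
    then show ?thesis using True by (intro exI[of _ "{}"] exI[of _ "pedges x (y # ys)"]) auto
  next
    case False
    have m1: "m \<in> set (y # ys)" using step.prems(2) False by simp
    have d1: "distinct (y # ys)" using step.prems(1) by simp
    obtain E1 E2 where E: "E1 \<union> E2 \<subseteq> pedges y ys" "E1 \<inter> E2 = {}"
      "reach E1 y m" "reach E2 z m" using step.IH[OF d1 m1] by blast
    have xn: "x \<notin> set (y # ys)" using step.prems(1) by simp
    have "{x, y} \<notin> E2" using E(1) pedges_sub_set[of "{x,y}" y ys] xn by auto
    moreover have "reach (insert {x, y} E1) x m"
      using reach_trans[OF reach_edge[of x y "insert {x, y} E1"] reach_mono[OF E(3)]] by auto
    ultimately show ?thesis using E
      by (intro exI[of _ "insert {x, y} E1"] exI[of _ E2]) auto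
  qed
qed

lemma to_set:
  assumes "reach E d v" "v \<in> W"
  shows "\<exists>m E3. m \<in> W \<and> E3 \<subseteq> E \<and> (\<forall>e\<in>E3. \<not> e \<subseteq> W) \<and> reach E3 d m"
proof -
  have "(d, v) \<in> {(x, y). {x, y} \<in> E}\<^sup>*" using assms(1) by (simp add: reach_def)
  then show ?thesis
proof (induction rule: converse_rtrancl_induct)
  case base
  have "v \<in> W \<and> {} \<subseteq> E \<and> (\<forall>e\<in>{}. \<not> e \<subseteq> W) \<and> reach {} v v" using assms(2) by simp
  then show ?case by blast
next
  case (step d w)
  show ?case
  proof (cases "d \<in> W")
    case True
    have "d \<in> W \<and> {} \<subseteq> E \<and> (\<forall>e\<in>{}. \<not> e \<subseteq> W) \<and> reach {} d d" using True by simp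
    then show ?thesis by blast
  next
    case False
    from step.IH obtain m E3 where m: "m \<in> W" "E3 \<subseteq> E" "\<forall>e\<in>E3. \<not> e \<subseteq> W" "reach E3 w m"
      by blast
    have "{d, w} \<in> E" using step(1) by simp
    moreover have "reach (insert {d, w} E3) d m"
      using reach_trans[OF reach_edge[of d w "insert {d, w} E3"] reach_mono[OF m(4)]] by auto
    ultimately show ?thesis using m False
      by (intro exI[of _ m] exI[of _ "insert {d, w} E3"]) auto
  qed
qed
qed

lemma median:
  assumes "reach E a b" "reach E a d"
  shows "\<exists>m E1 E2 E3. E1 \<subseteq> E \<and> E2 \<subseteq> E \<and> E3 \<subseteq> E \<and> E1 \<inter> E2 = {} \<and> E1 \<inter> E3 = {} \<and>
     E2 \<inter> E3 = {} \<and> reach E1 a m \<and> reach E2 b m \<and> reach E3 d m"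
proof -
  obtain p0 where "rtrancl_path (\<lambda>x y. {x, y} \<in> E) a p0 b" using assms(1) unfolding reach_path by blast
  then obtain p where p: "rtrancl_path (\<lambda>x y. {x, y} \<in> E) a p b" "distinct (a # p)"
    by (rule rtrancl_path_distinct) simp
  have ra: "reach E d a" using assms(2) by (rule reach_sym)
  obtain m E3 where m: "m \<in> set (a # p)" "E3 \<subseteq> E" "\<forall>e\<in>E3. \<not> e \<subseteq> set (a # p)"
    "reach E3 d m" using to_set[OF ra list.set_intros(1)] by blast
  obtain E1 E2 where E: "E1 \<union> E2 \<subseteq> pedges a p" "E1 \<inter> E2 = {}" "reach E1 a m" "reach E2 b m"
    using split_path[OF p m(1)] by blast
  have sub: "pedges a p \<subseteq> E" using pedges_sub_E[OF p(1)] .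
  have sw: "e \<subseteq> set (a # p)" if "e \<in> E1 \<union> E2" for e
  proof -
    have "e \<in> pedges a p" using E(1) that by blast
    then show ?thesis by (rule pedges_sub_set)
  qed
  have "E1 \<inter> E3 = {}"
  proof (rule equals0I)
    fix e assume e: "e \<in> E1 \<inter> E3"
    then have "e \<subseteq> set (a # p)" using sw by blast
    moreover have "\<not> e \<subseteq> set (a # p)" using e m(3) by blast
    ultimately show False by contradiction
  qed
  moreover have "E2 \<inter> E3 = {}"
  proof (rule equals0I)
    fix e assume e: "e \<in> E2 \<inter> E3"
    then have "e \<subseteq> set (a # p)" using sw by blast
    moreover have "\<not> e \<subseteq> set (a # p)" using e m(3) by blast
    ultimately show False by contradiction
  qed
  moreover have "E1 \<subseteq> E" "E2 \<subseteq> E" using E(1) sub by auto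
  ultimately show ?thesis using E(2-4) m(2,4) by blast
qed

definition med :: "'b graph \<Rightarrow> ('b set \<Rightarrow> nat) \<Rightarrow> bool" where
  "med G c \<longleftrightarrow> (\<forall>t::nat \<Rightarrow> 'b. (\<forall>i<3. t i \<in> verts G) \<longrightarrow>
     (\<exists>m F. (\<forall>i<3. F i \<subseteq> edges G \<and> reach (F i) (t i) m) \<and>
       (\<forall>i<3. \<forall>j<3. i \<noteq> j \<longrightarrow> F i \<inter> F j = {}) \<and> inj_on c (\<Union>i<3. F i)))"

lemma less3: "(i::nat) < 3 \<Longrightarrow> i = 0 \<or> i = 1 \<or> i = 2" by auto

lemma rainbow_med:
  assumes sg: "simple_graph G" and c3: "card (verts G) \<ge> 3"
    and rc: "three_rainbow_coloring G c"
  shows "med G c"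
  unfolding med_def
proof (intro allI impI)
  fix t :: "nat \<Rightarrow> _" assume t: "\<forall>i<3. t i \<in> verts G"
  have "card {t 0, t 1, t 2} \<le> 3" by (rule order_trans[OF card_insert_le_m1]) (auto simp: card_insert_le_m1)
  then obtain S where S: "{t 0, t 1, t 2} \<subseteq> S" "S \<subseteq> verts G" "card S = 3"
    using exists_subset_between[of "{t 0, t 1, t 2}" 3 "verts G"] c3 t sg
    unfolding simple_graph_def by auto
  then obtain T where T: "subgraph T G" "is_tree T" "rainbow c T" "S \<subseteq> verts T"
    using rc unfolding three_rainbow_coloring_def by blast
  then have "connected_graph T" unfolding is_tree_def by simp
  then have r01: "reach (edges T) (t 0) (t 1)" and r02: "reach (edges T) (t 0) (t 2)"
    using T(4) S(1) unfolding connected_reach by auto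
  then obtain m E1 E2 E3 where E: "E1 \<subseteq> edges T" "E2 \<subseteq> edges T" "E3 \<subseteq> edges T"
    "E1 \<inter> E2 = {}" "E1 \<inter> E3 = {}" "E2 \<inter> E3 = {}"
    "reach E1 (t 0) m" "reach E2 (t 1) m" "reach E3 (t 2) m"
    using median[OF r01 r02] by blast
  define F where "F = (\<lambda>i::nat. if i = 0 then E1 else if i = 1 then E2 else E3)"
  have et: "edges T \<subseteq> edges G" using T(1) unfolding subgraph_def by simp
  have "\<forall>i<3. F i \<subseteq> edges G \<and> reach (F i) (t i) m"
  proof (intro allI impI)
    fix i :: nat assume "i < 3"
    then consider "i = 0" | "i = 1" | "i = 2" by linarith
    then show "F i \<subseteq> edges G \<and> reach (F i) (t i) m"
      by cases (use E et in \<open>auto simp: F_def\<close>)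
  qed
  moreover have "\<forall>i<3. \<forall>j<3. i \<noteq> j \<longrightarrow> F i \<inter> F j = {}"
  proof (intro allI impI)
    fix i j :: nat assume "i < 3" "j < 3" "i \<noteq> j"
    then show "F i \<inter> F j = {}" using E(4-6) unfolding F_def
      by (auto dest!: less3)
  qed
  moreover have "inj_on c (\<Union>i<3. F i)"
  proof (rule inj_on_subset)
    show "inj_on c (edges T)" using T(3) unfolding rainbow_def .
    show "(\<Union>i<3. F i) \<subseteq> edges T" using E(1-3) unfolding F_def by auto
  qed
  ultimately show "\<exists>m F. (\<forall>i<3. F i \<subseteq> edges G \<and> reach (F i) (t i) m) \<and>
       (\<forall>i<3. \<forall>j<3. i \<noteq> j \<longrightarrow> F i \<inter> F j = {}) \<and> inj_on c (\<Union>i<3. F i)" by blast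
qed



abbreviation cpl where "cpl \<equiv> cart_prod_list"

lemma verts_Cons: "v \<in> verts (cpl (G # Gs)) \<longleftrightarrow>
   (\<exists>x xs. v = x # xs \<and> x \<in> verts G \<and> xs \<in> verts (cpl Gs))"
  by (auto simp: Let_def cart_prod_def verts_def)

lemma edges_Cons: "e \<in> edges (cpl (G # Gs)) \<longleftrightarrow>
   (\<exists>g1 h1 g2 h2. e = {g1 # h1, g2 # h2} \<and> g1 \<in> verts G \<and> g2 \<in> verts G \<and>
      h1 \<in> verts (cpl Gs) \<and> h2 \<in> verts (cpl Gs) \<and>
      ((g1 = g2 \<and> {h1, h2} \<in> edges (cpl Gs)) \<or> (h1 = h2 \<and> {g1, g2} \<in> edges G)))"
proof -
  have "edges (cpl (G # Gs)) = (\<lambda>e. (\<lambda>(x, xs). x # xs) ` e) ` edges (cart_prod G (cpl Gs))"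
    by (simp add: Let_def edges_def)
  also have "\<dots> = (\<lambda>e. (\<lambda>(x, xs). x # xs) ` e) ` {{(g1, h1), (g2, h2)} | g1 h1 g2 h2.
        g1 \<in> verts G \<and> g2 \<in> verts G \<and> h1 \<in> verts (cpl Gs) \<and> h2 \<in> verts (cpl Gs) \<and>
        ((g1 = g2 \<and> {h1, h2} \<in> edges (cpl Gs)) \<or> (h1 = h2 \<and> {g1, g2} \<in> edges G))}"
    by (simp add: cart_prod_def edges_def[of "(_, _)"])
  finally have eq: "edges (cpl (G # Gs)) = (\<lambda>e. (\<lambda>(x, xs). x # xs) ` e) ` {{(g1, h1), (g2, h2)} | g1 h1 g2 h2.
        g1 \<in> verts G \<and> g2 \<in> verts G \<and> h1 \<in> verts (cpl Gs) \<and> h2 \<in> verts (cpl Gs) \<and>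
        ((g1 = g2 \<and> {h1, h2} \<in> edges (cpl Gs)) \<or> (h1 = h2 \<and> {g1, g2} \<in> edges G))}" .
  show ?thesis unfolding eq
  proof
    assume "e \<in> (\<lambda>e. (\<lambda>(x, xs). x # xs) ` e) ` {{(g1, h1), (g2, h2)} | g1 h1 g2 h2.
        g1 \<in> verts G \<and> g2 \<in> verts G \<and> h1 \<in> verts (cpl Gs) \<and> h2 \<in> verts (cpl Gs) \<and>
        ((g1 = g2 \<and> {h1, h2} \<in> edges (cpl Gs)) \<or> (h1 = h2 \<and> {g1, g2} \<in> edges G))}"
    then obtain g1 h1 g2 h2 where "e = (\<lambda>(x, xs). x # xs) ` {(g1, h1), (g2, h2)}"
      "g1 \<in> verts G \<and> g2 \<in> verts G \<and> h1 \<in> verts (cpl Gs) \<and> h2 \<in> verts (cpl Gs) \<and>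
        ((g1 = g2 \<and> {h1, h2} \<in> edges (cpl Gs)) \<or> (h1 = h2 \<and> {g1, g2} \<in> edges G))"
      by blast
    then show "\<exists>g1 h1 g2 h2. e = {g1 # h1, g2 # h2} \<and> g1 \<in> verts G \<and> g2 \<in> verts G \<and>
      h1 \<in> verts (cpl Gs) \<and> h2 \<in> verts (cpl Gs) \<and>
      ((g1 = g2 \<and> {h1, h2} \<in> edges (cpl Gs)) \<or> (h1 = h2 \<and> {g1, g2} \<in> edges G))"
      by (intro exI[of _ g1] exI[of _ h1] exI[of _ g2] exI[of _ h2]) simp
  next
    assume "\<exists>g1 h1 g2 h2. e = {g1 # h1, g2 # h2} \<and> g1 \<in> verts G \<and> g2 \<in> verts G \<and>
      h1 \<in> verts (cpl Gs) \<and> h2 \<in> verts (cpl Gs) \<and>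
      ((g1 = g2 \<and> {h1, h2} \<in> edges (cpl Gs)) \<or> (h1 = h2 \<and> {g1, g2} \<in> edges G))"
    then obtain g1 h1 g2 h2 where a: "e = {g1 # h1, g2 # h2}" "g1 \<in> verts G \<and> g2 \<in> verts G \<and>
      h1 \<in> verts (cpl Gs) \<and> h2 \<in> verts (cpl Gs) \<and>
      ((g1 = g2 \<and> {h1, h2} \<in> edges (cpl Gs)) \<or> (h1 = h2 \<and> {g1, g2} \<in> edges G))" by blast
    have "e = (\<lambda>(x, xs). x # xs) ` {(g1, h1), (g2, h2)}" using a(1) by simp
    then show "e \<in> (\<lambda>e. (\<lambda>(x, xs). x # xs) ` e) ` {{(g1, h1), (g2, h2)} | g1 h1 g2 h2.
        g1 \<in> verts G \<and> g2 \<in> verts G \<and> h1 \<in> verts (cpl Gs) \<and> h2 \<in> verts (cpl Gs) \<and>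
        ((g1 = g2 \<and> {h1, h2} \<in> edges (cpl Gs)) \<or> (h1 = h2 \<and> {g1, g2} \<in> edges G))}"
      using a(2) by blast
  qed
qed

lemma verts_cpl: "v \<in> verts (cpl Gs) \<longleftrightarrow> length v = length Gs \<and> (\<forall>i<length Gs. v ! i \<in> verts (Gs ! i))"
proof (induction Gs arbitrary: v)
  case Nil then show ?case by (simp add: verts_def)
next
  case (Cons G Gs)
  show ?case
  proof
    assume "v \<in> verts (cpl (G # Gs))"
    then obtain x xs where "v = x # xs" "x \<in> verts G" "xs \<in> verts (cpl Gs)"
      using verts_Cons by metis
    then show "length v = length (G # Gs) \<and> (\<forall>i<length (G # Gs). v ! i \<in> verts ((G # Gs) ! i))"
      using Cons.IH[of xs] by (auto simp: All_less_Suc2)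
  next
    assume a: "length v = length (G # Gs) \<and> (\<forall>i<length (G # Gs). v ! i \<in> verts ((G # Gs) ! i))"
    then obtain x xs where v: "v = x # xs" by (cases v) auto
    then show "v \<in> verts (cpl (G # Gs))"
      using a Cons.IH[of xs] unfolding verts_Cons by (auto simp: All_less_Suc2)
  qed
qed

lemma simple_cpl: "\<forall>G\<in>set Gs. simple_graph G \<Longrightarrow> simple_graph (cpl Gs)"
proof (induction Gs)
  case Nil then show ?case by (simp add: simple_graph_def verts_def edges_def)
next
  case (Cons G Gs)
  have sG: "simple_graph G" and sR: "simple_graph (cpl Gs)" using Cons by auto
  have "verts (cpl (G # Gs)) \<subseteq> (\<lambda>(x, xs). x # xs) ` (verts G \<times> verts (cpl Gs))"
    by (simp add: Let_def cart_prod_def verts_def)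
  moreover have "finite ((\<lambda>(x, xs). x # xs) ` (verts G \<times> verts (cpl Gs)))"
    using sG sR unfolding simple_graph_def by auto
  ultimately have fin: "finite (verts (cpl (G # Gs)))" by (rule finite_subset)
  have "e \<subseteq> verts (cpl (G # Gs)) \<and> card e = 2" if e: "e \<in> edges (cpl (G # Gs))" for e
  proof -
    obtain g1 h1 g2 h2 where E: "e = {g1 # h1, g2 # h2}" "g1 \<in> verts G" "g2 \<in> verts G"
      "h1 \<in> verts (cpl Gs)" "h2 \<in> verts (cpl Gs)"
      "(g1 = g2 \<and> {h1, h2} \<in> edges (cpl Gs)) \<or> (h1 = h2 \<and> {g1, g2} \<in> edges G)"
      using e unfolding edges_Cons by blast
    have "g1 # h1 \<noteq> g2 # h2"
    proof (cases "g1 = g2 \<and> {h1, h2} \<in> edges (cpl Gs)")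
      case True
      then have "card {h1, h2} = 2" using sR simple_edge_card by blast
      then show ?thesis using True by auto
    next
      case False
      then have "card {g1, g2} = 2" using E(6) sG simple_edge_card by blast
      then show ?thesis by auto
    qed
    moreover have "g1 # h1 \<in> verts (cpl (G # Gs))" "g2 # h2 \<in> verts (cpl (G # Gs))"
      using E(2-5) by (simp_all only: verts_Cons) blast+
    ultimately show ?thesis using E(1) by (simp del: cart_prod_list.simps)
  qed
  then show ?case using fin unfolding simple_graph_def by blast
qed

declare cart_prod_list.simps(2)[simp del]

lemma edgeG: "{x, y} \<in> edges G \<Longrightarrow> x \<in> verts G \<Longrightarrow> y \<in> verts G \<Longrightarrow> h \<in> verts (cpl Gs) \<Longrightarrow>
  {x # h, y # h} \<in> edges (cpl (G # Gs))"
  unfolding edges_Cons by blast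

lemma edgeR: "{h1, h2} \<in> edges (cpl Gs) \<Longrightarrow> x \<in> verts G \<Longrightarrow> h1 \<in> verts (cpl Gs) \<Longrightarrow> h2 \<in> verts (cpl Gs) \<Longrightarrow>
  {x # h1, x # h2} \<in> edges (cpl (G # Gs))"
  unfolding edges_Cons by blast



definition liftG :: "'b list \<Rightarrow> 'b set set \<Rightarrow> 'b list set set" where
  "liftG m E = (\<lambda>e. (\<lambda>v. v # m) ` e) ` E"

definition liftR :: "'b \<Rightarrow> 'b list set set \<Rightarrow> 'b list set set" where
  "liftR x F = (\<lambda>e. (Cons x) ` e) ` F"

lemma medD: fixes t :: "nat \<Rightarrow> 'b" assumes "med G c" "\<forall>i<3. t i \<in> verts G" shows "(\<exists>m F. (\<forall>i<3. F i \<subseteq> edges G \<and> reach (F i) (t i) m) \<and>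
       (\<forall>i<3. \<forall>j<3. i \<noteq> j \<longrightarrow> F i \<inter> F j = {}) \<and> inj_on c (\<Union>i<3. F i))"
  by (rule mp[OF assms(1)[unfolded med_def, THEN spec[of _ t]] assms(2)])

lemma reach_liftG: "reach E u v \<Longrightarrow> reach (liftG m E) (u # m) (v # m)"
proof (rule reach_map[where f = "\<lambda>v. v # m"])
  fix p q assume "{p, q} \<in> E"
  then have "(\<lambda>v. v # m) ` {p, q} \<in> liftG m E" unfolding liftG_def by (rule imageI)
  then show "p # m = q # m \<or> {p # m, q # m} \<in> liftG m E" by simp
qed

lemma reach_liftR: "reach F u v \<Longrightarrow> reach (liftR x F) (x # u) (x # v)"
proof (rule reach_map[where f = "Cons x"])
  fix p q assume "{p, q} \<in> F"
  then have "(Cons x) ` {p, q} \<in> liftR x F" unfolding liftR_def by (rule imageI)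
  then show "x # p = x # q \<or> {x # p, x # q} \<in> liftR x F" by simp
qed

lemma KG:
  assumes "e \<in> liftG m E" "E \<subseteq> edges G" "simple_graph G"
  shows "card (hd ` e) = 2 \<and> hd ` e \<in> E \<and> e = (\<lambda>v. v # m) ` (hd ` e)"
proof -
  obtain e0 where e0: "e0 \<in> E" "e = (\<lambda>v. v # m) ` e0" using assms(1) unfolding liftG_def by blast
  have "hd ` e = e0" unfolding e0(2) image_image by simp
  moreover have "card e0 = 2" using e0(1) assms(2,3) simple_edge_card by blast
  ultimately show ?thesis using e0 by simp
qed

lemma KR:
  assumes "e \<in> liftR x F" "F \<subseteq> edges R" "simple_graph R"
  shows "card (hd ` e) = 1 \<and> tl ` e \<in> F \<and> e = Cons x ` (tl ` e)"
proof -
  obtain e0 where e0: "e0 \<in> F" "e = Cons x ` e0" using assms(1) unfolding liftR_def by blast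
  have "tl ` e = e0" unfolding e0(2) image_image by simp
  moreover have "card e0 = 2" using e0(1) assms(2,3) simple_edge_card by blast
  moreover then have "e0 \<noteq> {}" by auto
  then have "hd ` e = {x}" unfolding e0(2) image_image by auto
  ultimately show ?thesis using e0 by simp
qed

definition comb :: "nat \<Rightarrow> ('b set \<Rightarrow> nat) \<Rightarrow> ('b list set \<Rightarrow> nat) \<Rightarrow> 'b list set \<Rightarrow> nat" where
  "comb n1 c1 c2 e = (if card (hd ` e) = 2 then c1 (hd ` e) else n1 + c2 (tl ` e))"

lemma comb_range:
  assumes sG: "simple_graph G" and c1: "c1 ` edges G \<subseteq> {..<n1}"
    and c2: "c2 ` edges (cpl Gs) \<subseteq> {..<n2}"
  shows "comb n1 c1 c2 ` edges (cpl (G # Gs)) \<subseteq> {..<n1 + n2}"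
proof
  fix k assume "k \<in> comb n1 c1 c2 ` edges (cpl (G # Gs))"
  then obtain e where e: "e \<in> edges (cpl (G # Gs))" "k = comb n1 c1 c2 e" by blast
  then obtain g1 h1 g2 h2 where E: "e = {g1 # h1, g2 # h2}"
      "(g1 = g2 \<and> {h1, h2} \<in> edges (cpl Gs)) \<or> (h1 = h2 \<and> {g1, g2} \<in> edges G)"
      unfolding edges_Cons by blast
  show "k \<in> {..<n1 + n2}"
  proof (cases "g1 = g2 \<and> {h1, h2} \<in> edges (cpl Gs)")
    case True
    then have "hd ` e = {g1}" "tl ` e = {h1, h2}" using E(1) by auto
    then have "k = n1 + c2 {h1, h2}" using e(2) unfolding comb_def by simp
    moreover have "c2 {h1, h2} < n2" using c2 True by auto
    ultimately show ?thesis by simp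
  next
    case False
    then have g: "h1 = h2" "{g1, g2} \<in> edges G" using E(2) by auto
    then have "hd ` e = {g1, g2}" using E(1) by auto
    moreover have "card {g1, g2} = 2" using g sG simple_edge_card by blast
    ultimately have "k = c1 {g1, g2}" using e(2) unfolding comb_def by simp
    moreover have "c1 {g1, g2} < n1" using c1 g by auto
    ultimately show ?thesis by simp
  qed
qed

lemma med_step:
  assumes sG: "simple_graph G" and sR: "simple_graph (cpl Gs)"
    and c1: "c1 ` edges G \<subseteq> {..<n1}" and m1: "med G c1"
    and m2: "med (cpl Gs) c2"
  shows "med (cpl (G # Gs)) (comb n1 c1 c2)"
  unfolding med_def
proof (intro allI impI)
  let ?R = "cpl Gs" and ?c = "comb n1 c1 c2"
  fix t :: "nat \<Rightarrow> _" assume t: "\<forall>i<3. t i \<in> verts (cpl (G # Gs))"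
  define tx where "tx i = hd (t i)" for i
  define th where "th i = tl (t i)" for i
  have tdec: "t i = tx i # th i \<and> tx i \<in> verts G \<and> th i \<in> verts ?R" if i3: "i < 3" for i
  proof -
    obtain x xs where "t i = x # xs" "x \<in> verts G" "xs \<in> verts ?R"
      using t i3 unfolding verts_Cons by blast
    then show ?thesis unfolding tx_def th_def by simp
  qed
  have txv: "\<forall>i<3. tx i \<in> verts G" using tdec by simp
  have thv: "\<forall>i<3. th i \<in> verts ?R" using tdec by simp
  obtain mG FG where G: "\<forall>i<3. FG i \<subseteq> edges G \<and> reach (FG i) (tx i) mG"
    "\<forall>i<3. \<forall>j<3. i \<noteq> j \<longrightarrow> FG i \<inter> FG j = {}" "inj_on c1 (\<Union>i<3. FG i)"
    using medD[OF m1 txv] by blast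
  obtain mR FR where R: "\<forall>i<3. FR i \<subseteq> edges ?R \<and> reach (FR i) (th i) mR"
    "\<forall>i<3. \<forall>j<3. i \<noteq> j \<longrightarrow> FR i \<inter> FR j = {}" "inj_on c2 (\<Union>i<3. FR i)"
    using medD[OF m2 thv] by blast
  have mRv: "mR \<in> verts ?R"
  proof (rule reach_in)
    show "reach (FR 0) (th 0) mR" using R(1) by simp
    show "th 0 \<in> verts ?R" using tdec[of 0] by simp
    have "FR 0 \<subseteq> edges ?R" using R(1) by simp
    then show "\<Union> (FR 0) \<subseteq> verts ?R" using simple_edge_sub[OF sR] by blast
  qed
  define F where "F i = liftG mR (FG i) \<union> liftR (tx i) (FR i)" for i
  have A: "F i \<subseteq> edges (cpl (G # Gs)) \<and> reach (F i) (t i) (mG # mR)" if i: "i < 3" for i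
  proof
    show "F i \<subseteq> edges (cpl (G # Gs))"
    proof
      fix e assume "e \<in> F i"
      then consider (g) "e \<in> liftG mR (FG i)" | (r) "e \<in> liftR (tx i) (FR i)" unfolding F_def by blast
      then show "e \<in> edges (cpl (G # Gs))"
      proof cases
        case g
        then obtain e0 where e0: "e0 \<in> FG i" "e = (\<lambda>v. v # mR) ` e0" unfolding liftG_def by blast
        then have e0G: "e0 \<in> edges G" using G(1) i by blast
        then obtain x y where "e0 = {x, y}" using simple_edge_card[OF sG e0G] card_2_iff by metis
        moreover have "x \<in> verts G" "y \<in> verts G" using simple_edge_sub[OF sG e0G] calculation by blast+
        ultimately show ?thesis using e0 e0G edgeG mRv by simp
      next
        case r
        then obtain e0 where e0: "e0 \<in> FR i" "e = Cons (tx i) ` e0" unfolding liftR_def by blast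
        then have e0G: "e0 \<in> edges ?R" using R(1) i by blast
        then obtain x y where "e0 = {x, y}" using simple_edge_card[OF sR e0G] card_2_iff by metis
        moreover have "x \<in> verts ?R" "y \<in> verts ?R" using simple_edge_sub[OF sR e0G] calculation by blast+
        ultimately show ?thesis using e0 e0G edgeR[of x y Gs "tx i" G] tdec[OF i] by simp
      qed
    qed
    have r1: "reach (F i) (tx i # th i) (tx i # mR)"
      using reach_liftR[of "FR i" "th i" mR "tx i"] R(1) i unfolding F_def
      by (meson Un_upper2 reach_mono)
    have r2: "reach (F i) (tx i # mR) (mG # mR)"
      using reach_liftG[of "FG i" "tx i" mG mR] G(1) i unfolding F_def
      by (meson Un_upper1 reach_mono)
    show "reach (F i) (t i) (mG # mR)" using reach_trans[OF r1 r2] tdec[OF i] by simp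
  qed
  have B: "F i \<inter> F j = {}" if ij: "i < 3" "j < 3" "i \<noteq> j" for i j
  proof (rule equals0I)
    fix e assume e: "e \<in> F i \<inter> F j"
    have FGi: "FG i \<subseteq> edges G" "FG j \<subseteq> edges G" using G(1) ij by auto
    have FRi: "FR i \<subseteq> edges ?R" "FR j \<subseteq> edges ?R" using R(1) ij by auto
    consider (gg) "e \<in> liftG mR (FG i)" "e \<in> liftG mR (FG j)"
      | (gr) "e \<in> liftG mR (FG i)" "e \<in> liftR (tx j) (FR j)"
      | (rg) "e \<in> liftR (tx i) (FR i)" "e \<in> liftG mR (FG j)"
      | (rr) "e \<in> liftR (tx i) (FR i)" "e \<in> liftR (tx j) (FR j)"
      using e unfolding F_def by blast
    then show False
    proof cases
      case gg
      then have "hd ` e \<in> FG i \<inter> FG j" using KG[OF _ FGi(1) sG] KG[OF _ FGi(2) sG] by blast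
      then show False using G(2) ij by blast
    next
      case gr
      then show False using KG[OF gr(1) FGi(1) sG] KR[OF gr(2) FRi(2) sR] by simp
    next
      case rg
      then show False using KG[OF rg(2) FGi(2) sG] KR[OF rg(1) FRi(1) sR] by simp
    next
      case rr
      then have "tl ` e \<in> FR i \<inter> FR j" using KR[OF _ FRi(1) sR] KR[OF _ FRi(2) sR] by blast
      then show False using R(2) ij by blast
    qed
  qed
  have C: "inj_on ?c (\<Union>i<3. F i)"
  proof (rule inj_onI)
    fix e e' assume e: "e \<in> (\<Union>i<3. F i)" and e': "e' \<in> (\<Union>i<3. F i)" and ce: "?c e = ?c e'"
    obtain i where i: "i < 3" "e \<in> F i" using e by blast
    obtain j where j: "j < 3" "e' \<in> F j" using e' by blast
    have FGi: "FG i \<subseteq> edges G" "FG j \<subseteq> edges G" using G(1) i j by auto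
    have FRi: "FR i \<subseteq> edges ?R" "FR j \<subseteq> edges ?R" using R(1) i j by auto
    have colG: "?c x = c1 (hd ` x) \<and> c1 (hd ` x) < n1 \<and> hd ` x \<in> (\<Union>i<3. FG i)"
      if "x \<in> liftG mR (FG k)" "k < 3" for x k
    proof -
      have "FG k \<subseteq> edges G" using G(1) that(2) by auto
      from KG[OF that(1) this sG] have "card (hd ` x) = 2" "hd ` x \<in> FG k" by auto
      moreover have "hd ` x \<in> edges G" using \<open>hd ` x \<in> FG k\<close> \<open>FG k \<subseteq> edges G\<close> by blast
      ultimately show ?thesis unfolding comb_def using c1 that(2) by auto
    qed
    have colR: "?c x = n1 + c2 (tl ` x) \<and> tl ` x \<in> FR k"
      if "x \<in> liftR (tx k) (FR k)" "k < 3" for x k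
    proof -
      have "FR k \<subseteq> edges ?R" using R(1) that(2) by auto
      from KR[OF that(1) this sR] show ?thesis unfolding comb_def by auto
    qed
    consider (gg) "e \<in> liftG mR (FG i)" "e' \<in> liftG mR (FG j)"
      | (gr) "e \<in> liftG mR (FG i)" "e' \<in> liftR (tx j) (FR j)"
      | (rg) "e \<in> liftR (tx i) (FR i)" "e' \<in> liftG mR (FG j)"
      | (rr) "e \<in> liftR (tx i) (FR i)" "e' \<in> liftR (tx j) (FR j)"
      using i(2) j(2) unfolding F_def by blast
    then show "e = e'"
    proof cases
      case gg
      have "c1 (hd ` e) = c1 (hd ` e')" using colG[OF gg(1) i(1)] colG[OF gg(2) j(1)] ce by simp
      then have "hd ` e = hd ` e'" using G(3) colG[OF gg(1) i(1)] colG[OF gg(2) j(1)]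
        by (meson inj_onD)
      then show ?thesis using KG[OF gg(1) FGi(1) sG] KG[OF gg(2) FGi(2) sG] by metis
    next
      case gr
      have "?c e < n1" "?c e' \<ge> n1" using colG[OF gr(1) i(1)] colR[OF gr(2) j(1)] by simp_all
      then show ?thesis using ce by linarith
    next
      case rg
      have "?c e' < n1" "?c e \<ge> n1" using colG[OF rg(2) j(1)] colR[OF rg(1) i(1)] by simp_all
      then show ?thesis using ce by linarith
    next
      case rr
      have "c2 (tl ` e) = c2 (tl ` e')" using colR[OF rr(1) i(1)] colR[OF rr(2) j(1)] ce by simp
      moreover have "tl ` e \<in> (\<Union>i<3. FR i)" "tl ` e' \<in> (\<Union>i<3. FR i)"
        using colR[OF rr(1) i(1)] colR[OF rr(2) j(1)] i(1) j(1) by blast+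
      ultimately have tl: "tl ` e = tl ` e'" using R(3) by (meson inj_onD)
      have "i = j"
      proof (rule ccontr)
        assume "i \<noteq> j"
        then have d: "FR i \<inter> FR j = {}" using R(2) i(1) j(1) by simp
        have "tl ` e \<in> FR i" "tl ` e' \<in> FR j" using colR[OF rr(1) i(1)] colR[OF rr(2) j(1)] by simp_all
        then show False using d tl by auto
      qed
      have "e = Cons (tx i) ` (tl ` e)" "e' = Cons (tx j) ` (tl ` e')"
        using KR[OF rr(1) FRi(1) sR] KR[OF rr(2) FRi(2) sR] by simp_all
      then show ?thesis using \<open>i = j\<close> tl by metis
    qed
  qed
  show "\<exists>m F. (\<forall>i<3. F i \<subseteq> edges (cpl (G # Gs)) \<and> reach (F i) (t i) m) \<and>
       (\<forall>i<3. \<forall>j<3. i \<noteq> j \<longrightarrow> F i \<inter> F j = {}) \<and> inj_on ?c (\<Union>i<3. F i)"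
    using A B C by blast
qed



lemma rx3_exists:
  assumes sg: "simple_graph G" and cg: "connected_graph G"
  shows "\<exists>c. three_rainbow_coloring G c \<and> c ` edges G \<subseteq> {..<card (edges G)}"
proof -
  obtain h where h: "bij_betw h (edges G) {0..<card (edges G)}"
    using ex_bij_betw_finite_nat[OF simple_finite_edges[OF sg]] by blast
  obtain T where T: "is_tree T" "verts T = verts G" "edges T \<subseteq> edges G"
    using spanning_tree[OF sg cg] by blast
  have "three_rainbow_coloring G h"
    unfolding three_rainbow_coloring_def
  proof (intro allI impI)
    fix S assume S: "S \<subseteq> verts G \<and> card S = 3"
    have "subgraph T G" using T unfolding subgraph_def by simp
    moreover have "rainbow h T" unfolding rainbow_def
      using inj_on_subset[OF bij_betw_imp_inj_on[OF h] T(3)] .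
    ultimately show "\<exists>T. subgraph T G \<and> is_tree T \<and> rainbow h T \<and> S \<subseteq> verts T"
      using T S by blast
  qed
  moreover have "h ` edges G \<subseteq> {..<card (edges G)}" using bij_betw_imp_surj_on[OF h] by auto
  ultimately show ?thesis by blast
qed

lemma rx3_attained:
  assumes sg: "simple_graph G" and cg: "connected_graph G"
  shows "\<exists>c. three_rainbow_coloring G c \<and> c ` edges G \<subseteq> {..<rx3 G}"
proof -
  have "\<exists>n c. three_rainbow_coloring G c \<and> c ` edges G \<subseteq> {..<n}"
    using rx3_exists[OF sg cg] by blast
  then show ?thesis unfolding rx3_def by (rule LeastI_ex)
qed

lemma med_nil: "med (cpl []) (\<lambda>_. 0)"
  unfolding med_def
proof (intro allI impI)
  fix t :: "nat \<Rightarrow> 'b list" assume t: "\<forall>i<3. t i \<in> verts (cpl [])"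
  then have "\<forall>i<3. t i = []" by (simp add: verts_def)
  then have "(\<forall>i<3. {} \<subseteq> edges (cpl []) \<and> reach {} (t i) [])" by simp
  then show "\<exists>m F. (\<forall>i<3. F i \<subseteq> edges (cpl []) \<and> reach (F i) (t i) m) \<and>
       (\<forall>i<3. \<forall>j<3. i \<noteq> j \<longrightarrow> F i \<inter> F j = {}) \<and> inj_on (\<lambda>_. 0::nat) (\<Union>i<3. F i)"
    by (intro exI[of _ "[]"] exI[of _ "\<lambda>_. {}"]) simp
qed

lemma prod_med:
  "\<forall>G\<in>set Gs. simple_graph G \<and> connected_graph G \<and> card (verts G) \<ge> 3 \<Longrightarrow>
   \<exists>c. c ` edges (cpl Gs) \<subseteq> {..<sum_list (map rx3 Gs)} \<and> med (cpl Gs) c"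
proof (induction Gs)
  case Nil
  then show ?case using med_nil by (intro exI[of _ "\<lambda>_. 0"]) (simp add: edges_def)
next
  case (Cons G Gs)
  have sG: "simple_graph G" and cG: "connected_graph G" and c3: "card (verts G) \<ge> 3"
    using Cons.prems by auto
  have sR: "simple_graph (cpl Gs)" using Cons.prems simple_cpl by auto
  obtain c1 where c1: "three_rainbow_coloring G c1" "c1 ` edges G \<subseteq> {..<rx3 G}"
    using rx3_attained[OF sG cG] by blast
  have m1: "med G c1" using rainbow_med[OF sG c3 c1(1)] .
  obtain c2 where c2: "c2 ` edges (cpl Gs) \<subseteq> {..<sum_list (map rx3 Gs)}" "med (cpl Gs) c2"
    using Cons by auto
  show ?case
    using comb_range[OF sG c1(2) c2(1)] med_step[OF sG sR c1(2) m1 c2(2)]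
    by (intro exI[of _ "comb (rx3 G) c1 c2"]) simp
qed

lemma reach_restrict:
  assumes "reach E u m"
  shows "reach {e \<in> E. e \<subseteq> {v. reach E v m}} u m"
proof -
  have "(u, m) \<in> {(x, y). {x, y} \<in> E}\<^sup>*" using assms by (simp add: reach_def)
  then show ?thesis
  proof (induction rule: converse_rtrancl_induct)
    case base then show ?case by simp
  next
    case (step u w)
    have e: "{u, w} \<in> E" using step(1) by simp
    have rw: "reach E w m" using step(2) by (simp add: reach_def)
    have "reach E u m" using reach_trans[OF reach_edge[OF e] rw] .
    then have "{u, w} \<in> {e \<in> E. e \<subseteq> {v. reach E v m}}" using e rw by simp
    then show ?case using reach_trans[OF reach_edge step(3)] by blast
  qed
qed

lemma med_rainbow:
  assumes sg: "simple_graph G" and md: "med G c"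
  shows "three_rainbow_coloring G c"
  unfolding three_rainbow_coloring_def
proof (intro allI impI)
  fix S assume S: "S \<subseteq> verts G \<and> card S = 3"
  then obtain x y z where xyz: "S = {x, y, z}" unfolding card_3_iff by blast
  define t :: "nat \<Rightarrow> _" where "t i = (if i = 0 then x else if i = 1 then y else z)" for i
  have tv: "\<forall>i<3. t i \<in> verts G" using S xyz unfolding t_def by auto
  obtain m F where F: "\<forall>i<3. F i \<subseteq> edges G \<and> reach (F i) (t i) m"
    "inj_on c (\<Union>i<3. F i)" using medD[OF md tv] by blast
  define EA where "EA = (\<Union>i<3. F i)"
  define V where "V = {v. reach EA v m}"
  define E' where "E' = {e \<in> EA. e \<subseteq> V}"
  have EAs: "EA \<subseteq> edges G" using F(1) unfolding EA_def by auto
  have UEA: "\<Union>EA \<subseteq> verts G" using EAs simple_edge_sub[OF sg] by blast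
  have tV: "t i \<in> V" if "i < 3" for i
  proof -
    have r: "reach (F i) (t i) m" using F(1) that by blast
    have s: "F i \<subseteq> EA" using that unfolding EA_def by blast
    show ?thesis unfolding V_def using reach_mono[OF r s] by simp
  qed
  have SV: "S \<subseteq> V" using tV[of 0] tV[of 1] tV[of 2] xyz unfolding t_def by simp
  have mv: "m \<in> verts G"
  proof -
    have "reach EA x m" using tV[of 0] unfolding V_def t_def by simp
    then have "m = x \<or> m \<in> \<Union>EA" by (rule reach_end)
    then show ?thesis using UEA S xyz by auto
  qed
  have VG: "V \<subseteq> verts G"
  proof
    fix v assume "v \<in> V"
    then have "reach EA v m" unfolding V_def by simp
    then have "m = v \<or> m \<in> \<Union>EA" by (rule reach_end)
    have "reach EA m v" using \<open>reach EA v m\<close> by (rule reach_sym)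
    then have "v = m \<or> v \<in> \<Union>EA" by (rule reach_end)
    then show "v \<in> verts G" using mv UEA by auto
  qed
  have sH: "simple_graph (V, E')"
    unfolding simple_graph_def
  proof
    show "finite (verts (V, E'))" using VG sg unfolding simple_graph_def
      by (auto intro: finite_subset)
    show "\<forall>e\<in>edges (V, E'). e \<subseteq> verts (V, E') \<and> card e = 2"
      using EAs simple_edge_card[OF sg] unfolding E'_def by auto
  qed
  have rE': "reach E' v m" if "v \<in> V" for v
    using reach_restrict[of EA v m] that unfolding E'_def V_def by simp
  have cH: "connected_graph (V, E')"
    unfolding connected_reach
  proof
    have "m \<in> V" unfolding V_def by simp
    then show "verts (V, E') \<noteq> {}" by auto
    show "\<forall>u\<in>verts (V, E'). \<forall>v\<in>verts (V, E'). reach (edges (V, E')) u v"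
    proof (intro ballI)
      fix u v assume "u \<in> verts (V, E')" "v \<in> verts (V, E')"
      then have "reach E' u m" "reach E' v m" using rE' by auto
      then show "reach (edges (V, E')) u v" using reach_trans[OF _ reach_sym] by simp
    qed
  qed
  obtain T where T: "is_tree T" "verts T = V" "edges T \<subseteq> E'"
    using spanning_tree[OF sH cH] by auto
  have "subgraph T G" using T VG EAs unfolding subgraph_def E'_def by auto
  moreover have "rainbow c T" unfolding rainbow_def
  proof (rule inj_on_subset[OF F(2)])
    show "edges T \<subseteq> (\<Union>i<3. F i)" using T(3) unfolding E'_def EA_def by blast
  qed
  ultimately show "\<exists>T. subgraph T G \<and> is_tree T \<and> rainbow c T \<and> S \<subseteq> verts T"
    using T SV by blast
qed

lemma rx3_upper:
  assumes "\<forall>G\<in>set Gs. simple_graph G \<and> connected_graph G \<and> card (verts G) \<ge> 3"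
  shows "rx3 (cpl Gs) \<le> sum_list (map rx3 Gs)"
proof -
  obtain c where c: "c ` edges (cpl Gs) \<subseteq> {..<sum_list (map rx3 Gs)}" "med (cpl Gs) c"
    using prod_med[OF assms] by blast
  have "simple_graph (cpl Gs)" using assms simple_cpl by auto
  then have tr: "three_rainbow_coloring (cpl Gs) c" using c(2) by (rule med_rainbow)
  have "\<exists>c. three_rainbow_coloring (cpl Gs) c \<and> c ` edges (cpl Gs) \<subseteq> {..<sum_list (map rx3 Gs)}"
    using tr c(1) by blast
  then show ?thesis unfolding rx3_def by (rule Least_le)
qed



lemma sd_le:
  assumes "subgraph T G" "is_tree T" "S \<subseteq> verts T"
  shows "steiner_dist G S \<le> card (edges T)"
  unfolding steiner_dist_def using assms by (intro Least_le) blast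

lemma classify:
  assumes e: "e \<in> edges (cpl (G # Gs))" and sG: "simple_graph G"
  shows "(card (hd ` e) = 2 \<and> hd ` e \<in> edges G \<and> (\<exists>h. tl ` e = {h})) \<or>
         (card (hd ` e) = 1 \<and> tl ` e \<in> edges (cpl Gs))"
proof -
  obtain g1 h1 g2 h2 where E: "e = {g1 # h1, g2 # h2}"
      "(g1 = g2 \<and> {h1, h2} \<in> edges (cpl Gs)) \<or> (h1 = h2 \<and> {g1, g2} \<in> edges G)"
      using e unfolding edges_Cons by blast
  show ?thesis
  proof (cases "g1 = g2 \<and> {h1, h2} \<in> edges (cpl Gs)")
    case True
    then have "hd ` e = {g1}" "tl ` e = {h1, h2}" using E(1) by auto
    then show ?thesis using True by simp
  next
    case False
    then have g: "h1 = h2" "{g1, g2} \<in> edges G" using E(2) by auto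
    then have "hd ` e = {g1, g2}" "tl ` e = {h1}" using E(1) by auto
    moreover have "card {g1, g2} = 2" using g simple_edge_card[OF sG] by blast
    ultimately show ?thesis using g by auto
  qed
qed

lemma LB:
  "\<forall>G\<in>set Gs. simple_graph G \<Longrightarrow> subgraph H (cpl Gs) \<Longrightarrow> simple_graph H \<Longrightarrow> connected_graph H \<Longrightarrow>
   S \<subseteq> verts H \<Longrightarrow> (\<Sum>i<length Gs. steiner_dist (Gs ! i) ((\<lambda>v. v ! i) ` S)) \<le> card (edges H)"
proof (induction Gs arbitrary: H S)
  case Nil
  then show ?case by simp
next
  case (Cons G Gs)
  let ?P = "cpl (G # Gs)" and ?R = "cpl Gs"
  have sG: "simple_graph G" and sRs: "\<forall>G\<in>set Gs. simple_graph G" using Cons.prems by auto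
  have sR: "simple_graph ?R" using sRs simple_cpl by blast
  have sH: "simple_graph H" and cH: "connected_graph H" and SH: "S \<subseteq> verts H"
    using Cons.prems by auto
  have HP: "verts H \<subseteq> verts ?P" "edges H \<subseteq> edges ?P" using Cons.prems(2) unfolding subgraph_def by auto
  have vdec: "v = hd v # tl v \<and> hd v \<in> verts G \<and> tl v \<in> verts ?R" if vH: "v \<in> verts H" for v
  proof -
    have "v \<in> verts ?P" using HP(1) vH by blast
    then obtain x xs where "v = x # xs" "x \<in> verts G" "xs \<in> verts ?R"
      unfolding verts_Cons by blast
    then show ?thesis by simp
  qed
  have finE: "finite (edges H)" using simple_finite_edges[OF sH] .
  have finV: "finite (verts H)" using sH unfolding simple_graph_def by simp
  define EG where "EG = {e \<in> edges H. card (hd ` e) = 2}"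
  define ER where "ER = edges H - EG"
  define HG where "HG = (hd ` verts H, (\<lambda>e. hd ` e) ` EG)"
  define HR where "HR = (tl ` verts H, (\<lambda>e. tl ` e) ` ER)"
  have EGs: "EG \<subseteq> edges H" unfolding EG_def by blast
  have cardH: "card (edges H) = card EG + card ER"
  proof -
    have "finite EG" using finite_subset[OF EGs finE] .
    then have "card ER = card (edges H) - card EG" unfolding ER_def using card_Diff_subset EGs by blast
    moreover have "card EG \<le> card (edges H)" using card_mono[OF finE EGs] .
    ultimately show ?thesis by simp
  qed
  have cEG: "card (edges HG) \<le> card EG" unfolding HG_def using finite_subset[OF EGs finE]
    by (simp add: card_image_le)
  have cER: "card (edges HR) \<le> card ER" unfolding HR_def ER_def using finE
    by (simp add: card_image_le)
  have eH_sub: "e \<subseteq> verts H" if "e \<in> edges H" for e using simple_edge_sub[OF sH that] .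
  have sHG: "simple_graph HG" unfolding simple_graph_def HG_def
    using finV eH_sub unfolding EG_def by auto
  have subHG: "subgraph HG G" unfolding subgraph_def
  proof
    show "verts HG \<subseteq> verts G" unfolding HG_def using vdec by auto
    show "edges HG \<subseteq> edges G"
    proof
      fix e' assume "e' \<in> edges HG"
      then obtain e where e: "e \<in> edges H" "card (hd ` e) = 2" "e' = hd ` e"
        unfolding HG_def EG_def by auto
      from classify[OF subsetD[OF HP(2) e(1)] sG] e(2) show "e' \<in> edges G" using e(3) by auto
    qed
  qed
  have cHG: "connected_graph HG" unfolding connected_reach
  proof
    show "verts HG \<noteq> {}" using cH unfolding HG_def connected_graph_def by simp
    show "\<forall>u\<in>verts HG. \<forall>v\<in>verts HG. reach (edges HG) u v"
    proof (intro ballI)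
      fix u' v' assume "u' \<in> verts HG" "v' \<in> verts HG"
      then obtain u v where uv: "u \<in> verts H" "v \<in> verts H" "u' = hd u" "v' = hd v"
        unfolding HG_def by auto
      have r: "reach (edges H) u v" using cH uv(1,2) unfolding connected_reach by blast
      have "reach (edges HG) (hd u) (hd v)"
      proof (rule reach_map[OF _ r])
        fix p q assume pq: "{p, q} \<in> edges H"
        show "hd p = hd q \<or> {hd p, hd q} \<in> edges HG"
        proof (cases "hd p = hd q")
          case False
          then have "card (hd ` {p, q}) = 2" by simp
          then have "{p, q} \<in> EG" using pq unfolding EG_def by simp
          then have "hd ` {p, q} \<in> edges HG" unfolding HG_def edges_pair by (rule imageI)
          then show ?thesis by simp
        qed simp
      qed
      then show "reach (edges HG) u' v'" using uv by simp
    qed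
  qed
  obtain TG where TG: "is_tree TG" "verts TG = verts HG" "edges TG \<subseteq> edges HG"
    using spanning_tree[OF sHG cHG] by blast
  have sdG: "steiner_dist G (hd ` S) \<le> card (edges HG)"
  proof -
    have "subgraph TG G" using TG subHG unfolding subgraph_def by auto
    moreover have "hd ` S \<subseteq> verts TG" using TG(2) SH unfolding HG_def by auto
    ultimately have "steiner_dist G (hd ` S) \<le> card (edges TG)" using sd_le TG(1) by blast
    also have "\<dots> \<le> card (edges HG)"
      using card_mono[OF simple_finite_edges[OF sHG] TG(3)] .
    finally show ?thesis .
  qed
  have ERc: "card (hd ` e) = 1 \<and> tl ` e \<in> edges ?R" if "e \<in> ER" for e
  proof -
    have "e \<in> edges H" "card (hd ` e) \<noteq> 2" using that unfolding ER_def EG_def by auto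
    then show ?thesis using classify[OF subsetD[OF HP(2)] sG, of e] by auto
  qed
  have sHR: "simple_graph HR" unfolding simple_graph_def
  proof
    show "finite (verts HR)" unfolding HR_def using finV by simp
    show "\<forall>e\<in>edges HR. e \<subseteq> verts HR \<and> card e = 2"
    proof
      fix e' assume "e' \<in> edges HR"
      then obtain e where e: "e \<in> ER" "e' = tl ` e" unfolding HR_def by auto
      have "e \<subseteq> verts H" using e(1) eH_sub unfolding ER_def by blast
      then have "e' \<subseteq> verts HR" unfolding HR_def e(2) by auto
      moreover have "card e' = 2" using ERc[OF e(1)] e(2) simple_edge_card[OF sR] by auto
      ultimately show "e' \<subseteq> verts HR \<and> card e' = 2" by simp
    qed
  qed
  have subHR: "subgraph HR ?R" unfolding subgraph_def
  proof
    show "verts HR \<subseteq> verts ?R" unfolding HR_def using vdec by auto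
    show "edges HR \<subseteq> edges ?R" unfolding HR_def using ERc by auto
  qed
  have cHR: "connected_graph HR" unfolding connected_reach
  proof
    show "verts HR \<noteq> {}" using cH unfolding HR_def connected_graph_def by simp
    show "\<forall>u\<in>verts HR. \<forall>v\<in>verts HR. reach (edges HR) u v"
    proof (intro ballI)
      fix u' v' assume "u' \<in> verts HR" "v' \<in> verts HR"
      then obtain u v where uv: "u \<in> verts H" "v \<in> verts H" "u' = tl u" "v' = tl v"
        unfolding HR_def by auto
      have r: "reach (edges H) u v" using cH uv(1,2) unfolding connected_reach by blast
      have "reach (edges HR) (tl u) (tl v)"
      proof (rule reach_map[OF _ r])
        fix p q assume pq: "{p, q} \<in> edges H"
        show "tl p = tl q \<or> {tl p, tl q} \<in> edges HR"
        proof (cases "card (hd ` {p, q}) = 2")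
          case True
          then have "\<exists>h. tl ` {p, q} = {h}" using classify[OF subsetD[OF HP(2) pq] sG] by auto
          then show ?thesis by auto
        next
          case False
          then have "{p, q} \<in> ER" using pq unfolding ER_def EG_def by simp
          then have "tl ` {p, q} \<in> edges HR" unfolding HR_def edges_pair by (rule imageI)
          then show ?thesis by simp
        qed
      qed
      then show "reach (edges HR) u' v'" using uv by simp
    qed
  qed
  have IH: "(\<Sum>i<length Gs. steiner_dist (Gs ! i) ((\<lambda>v. v ! i) ` (tl ` S))) \<le> card (edges HR)"
  proof (rule Cons.IH[OF sRs subHR sHR cHR])
    show "tl ` S \<subseteq> verts HR" using SH unfolding HR_def by auto
  qed
  have img0: "(\<lambda>v. v ! 0) ` S = hd ` S"
  proof (rule image_cong[OF refl])
    fix v assume "v \<in> S"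
    then have "v = hd v # tl v" using vdec SH by blast
    then show "v ! 0 = hd v" by (metis nth_Cons_0)
  qed
  have imgS: "(\<lambda>v. v ! Suc i) ` S = (\<lambda>v. v ! i) ` (tl ` S)" for i
    unfolding image_image
  proof (rule image_cong[OF refl])
    fix v assume "v \<in> S"
    then have "v = hd v # tl v" using vdec SH by blast
    then show "v ! Suc i = tl v ! i" by (metis nth_Cons_Suc)
  qed
  have "(\<Sum>i<length (G # Gs). steiner_dist ((G # Gs) ! i) ((\<lambda>v. v ! i) ` S))
      = steiner_dist G (hd ` S) + (\<Sum>i<length Gs. steiner_dist (Gs ! i) ((\<lambda>v. v ! i) ` (tl ` S)))"
    by (simp add: sum.lessThan_Suc_shift img0 imgS del: sum.lessThan_Suc)
  also have "\<dots> \<le> card (edges HG) + card (edges HR)" using sdG IH by simp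
  also have "\<dots> \<le> card (edges H)" using cEG cER cardH by simp
  finally show ?case .
qed



lemma sdiam_attained:
  assumes sg: "simple_graph G" and c3: "card (verts G) \<ge> 3"
  shows "\<exists>x y z. x \<in> verts G \<and> y \<in> verts G \<and> z \<in> verts G \<and> x \<noteq> y \<and> y \<noteq> z \<and> x \<noteq> z \<and>
     steiner_dist G {x, y, z} = sdiam3 G"
proof -
  have fv: "finite (verts G)" using sg unfolding simple_graph_def by simp
  define A where "A = {S. S \<subseteq> verts G \<and> card S = 3}"
  have eq: "{steiner_dist G S | S. S \<subseteq> verts G \<and> card S = 3} = steiner_dist G ` A"
    unfolding A_def by blast
  have "finite A" unfolding A_def using fv by (auto intro: finite_subset[of _ "Pow (verts G)"])
  moreover have "A \<noteq> {}"
  proof -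
    obtain S where "{} \<subseteq> S" "S \<subseteq> verts G" "card S = 3"
      using exists_subset_between[of "{}" 3 "verts G"] c3 fv by auto
    then show ?thesis unfolding A_def by blast
  qed
  ultimately have "sdiam3 G \<in> steiner_dist G ` A"
    unfolding sdiam3_def eq by (intro Max_in) auto
  then obtain S where S: "S \<subseteq> verts G" "card S = 3" "steiner_dist G S = sdiam3 G"
    unfolding A_def by auto
  then obtain x y z where "S = {x, y, z}" "x \<noteq> y" "y \<noteq> z" "x \<noteq> z" unfolding card_3_iff by blast
  then show ?thesis using S by blast
qed

theorem theorem6:
  fixes Gs :: "'a graph list" and k :: nat
  assumes "k \<ge> 2" and "length Gs = k"
    and "\<forall>G\<in>set Gs. simple_graph G \<and> connected_graph G \<and> card (verts G) \<ge> 3"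
  shows "rx3 (cart_prod_list Gs) \<le> (\<Sum>i<k. rx3 (Gs ! i)) \<and>
         ((\<forall>i<k. rx3 (Gs ! i) = sdiam3 (Gs ! i)) \<longrightarrow>
          rx3 (cart_prod_list Gs) = (\<Sum>i<k. rx3 (Gs ! i)))"
proof -
  have valid: "\<forall>G\<in>set Gs. simple_graph G \<and> connected_graph G \<and> card (verts G) \<ge> 3"
    using assms(3) .
  have sRs: "\<forall>G\<in>set Gs. simple_graph G" using valid by blast
  have sumeq: "(\<Sum>i<k. rx3 (Gs ! i)) = sum_list (map rx3 Gs)"
    using assms(2) by (simp add: sum_list_sum_nth atLeast0LessThan)
  have upper: "rx3 (cpl Gs) \<le> (\<Sum>i<k. rx3 (Gs ! i))"
    using rx3_upper[OF valid] sumeq by simp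
  have sP: "simple_graph (cpl Gs)" using simple_cpl[OF sRs] .
  have "(\<forall>i<k. rx3 (Gs ! i) = sdiam3 (Gs ! i)) \<longrightarrow> rx3 (cpl Gs) = (\<Sum>i<k. rx3 (Gs ! i))"
  proof
    assume hyp: "\<forall>i<k. rx3 (Gs ! i) = sdiam3 (Gs ! i)"
    obtain c0 where c0: "c0 ` edges (cpl Gs) \<subseteq> {..<sum_list (map rx3 Gs)}" "med (cpl Gs) c0"
      using prod_med[OF valid] by blast
    have "three_rainbow_coloring (cpl Gs) c0" using med_rainbow[OF sP c0(2)] .
    then have "\<exists>n c. three_rainbow_coloring (cpl Gs) c \<and> c ` edges (cpl Gs) \<subseteq> {..<n}"
      using c0(1) by blast
    then have "\<exists>c. three_rainbow_coloring (cpl Gs) c \<and> c ` edges (cpl Gs) \<subseteq> {..<rx3 (cpl Gs)}"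
      unfolding rx3_def by (rule LeastI_ex)
    then obtain c where c: "three_rainbow_coloring (cpl Gs) c" "c ` edges (cpl Gs) \<subseteq> {..<rx3 (cpl Gs)}"
      by blast
    have "\<forall>i\<in>{..<k}. \<exists>p. fst p \<in> verts (Gs ! i) \<and> fst (snd p) \<in> verts (Gs ! i) \<and> snd (snd p) \<in> verts (Gs ! i) \<and>
       fst p \<noteq> fst (snd p) \<and> fst (snd p) \<noteq> snd (snd p) \<and> fst p \<noteq> snd (snd p) \<and>
       steiner_dist (Gs ! i) {fst p, fst (snd p), snd (snd p)} = sdiam3 (Gs ! i)"
    proof
      fix i assume "i \<in> {..<k}"
      then have "Gs ! i \<in> set Gs" using assms(2) by simp
      then have "simple_graph (Gs ! i)" "card (verts (Gs ! i)) \<ge> 3" using valid by auto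
      from sdiam_attained[OF this] obtain x y z where "x \<in> verts (Gs ! i) \<and> y \<in> verts (Gs ! i) \<and> z \<in> verts (Gs ! i) \<and> x \<noteq> y \<and> y \<noteq> z \<and> x \<noteq> z \<and>
         steiner_dist (Gs ! i) {x, y, z} = sdiam3 (Gs ! i)" by blast
      then show "\<exists>p. fst p \<in> verts (Gs ! i) \<and> fst (snd p) \<in> verts (Gs ! i) \<and> snd (snd p) \<in> verts (Gs ! i) \<and>
       fst p \<noteq> fst (snd p) \<and> fst (snd p) \<noteq> snd (snd p) \<and> fst p \<noteq> snd (snd p) \<and>
       steiner_dist (Gs ! i) {fst p, fst (snd p), snd (snd p)} = sdiam3 (Gs ! i)"
        by (intro exI[of _ "(x, y, z)"]) simp
    qed
    then obtain f where f: "\<forall>i\<in>{..<k}. fst (f i) \<in> verts (Gs ! i) \<and> fst (snd (f i)) \<in> verts (Gs ! i) \<and> snd (snd (f i)) \<in> verts (Gs ! i) \<and>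
       fst (f i) \<noteq> fst (snd (f i)) \<and> fst (snd (f i)) \<noteq> snd (snd (f i)) \<and> fst (f i) \<noteq> snd (snd (f i)) \<and>
       steiner_dist (Gs ! i) {fst (f i), fst (snd (f i)), snd (snd (f i))} = sdiam3 (Gs ! i)"
      by (rule bchoice[elim_format]) blast
    define a where "a i = fst (f i)" for i
    define b where "b i = fst (snd (f i))" for i
    define d where "d i = snd (snd (f i))" for i
    have abd: "a i \<in> verts (Gs ! i) \<and> b i \<in> verts (Gs ! i) \<and> d i \<in> verts (Gs ! i) \<and>
       a i \<noteq> b i \<and> b i \<noteq> d i \<and> a i \<noteq> d i \<and> steiner_dist (Gs ! i) {a i, b i, d i} = sdiam3 (Gs ! i)"
      if "i < k" for i using f that unfolding a_def b_def d_def by blast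
    define X where "X = map a [0..<k]"
    define Y where "Y = map b [0..<k]"
    define Z where "Z = map d [0..<k]"
    have k0: "0 < k" using assms(1) by simp
    have XYZ: "X \<in> verts (cpl Gs)" "Y \<in> verts (cpl Gs)" "Z \<in> verts (cpl Gs)"
      unfolding verts_cpl X_def Y_def Z_def using abd assms(2) by auto
    have ne: "X \<noteq> Y" "Y \<noteq> Z" "X \<noteq> Z"
    proof -
      have "X ! 0 = a 0" "Y ! 0 = b 0" "Z ! 0 = d 0" unfolding X_def Y_def Z_def using k0 by simp_all
      then show "X \<noteq> Y" "Y \<noteq> Z" "X \<noteq> Z" using abd[OF k0] by metis+
    qed
    define S where "S = {X, Y, Z}"
    have S3: "S \<subseteq> verts (cpl Gs) \<and> card S = 3" unfolding S_def using XYZ ne by auto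
    obtain T where T: "subgraph T (cpl Gs)" "is_tree T" "rainbow c T" "S \<subseteq> verts T"
      using c(1) S3 unfolding three_rainbow_coloring_def by blast
    have sT: "simple_graph T" and cT: "connected_graph T" using T(2) unfolding is_tree_def by auto
    have lb: "(\<Sum>i<length Gs. steiner_dist (Gs ! i) ((\<lambda>v. v ! i) ` S)) \<le> card (edges T)"
      using LB[OF sRs T(1) sT cT T(4)] .
    have projS: "(\<lambda>v. v ! i) ` S = {a i, b i, d i}" if "i < k" for i
      unfolding S_def X_def Y_def Z_def using that by simp
    have "(\<Sum>i<k. rx3 (Gs ! i)) = (\<Sum>i<length Gs. steiner_dist (Gs ! i) ((\<lambda>v. v ! i) ` S))"
      using assms(2) hyp abd projS by (intro sum.cong) auto
    also have "\<dots> \<le> card (edges T)" using lb .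
    also have "\<dots> \<le> card {..<rx3 (cpl Gs)}"
    proof (rule card_inj_on_le)
      show "inj_on c (edges T)" using T(3) unfolding rainbow_def .
      have "edges T \<subseteq> edges (cpl Gs)" using T(1) unfolding subgraph_def by simp
      then show "c ` edges T \<subseteq> {..<rx3 (cpl Gs)}" using c(2) by blast
    qed simp
    also have "\<dots> = rx3 (cpl Gs)" by simp
    finally show "rx3 (cpl Gs) = (\<Sum>i<k. rx3 (Gs ! i))" using upper by simp
  qed
  then show ?thesis using upper by simp
qed


end
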